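(* Assume (A1)–(A4). There is a constant $K$ independent of $N$ such that for every $1\le i\le N$, $$\mathbb E\Big[\sup_{0\le t\le T}\big|\beta^*(t,\bar x_i(t),\bar x^{(N)}(t))-\bar\beta_N(t,\bar x_i(t),\bar x^{(N)}(t))\big|^2\Big]\le\frac K{N^2},$$ where $\bar x_i$ is the optimal state of Problem (LP).
   Context: For each $N\ge1$: on a complete filtered probability space, $W^0,W_1,\dots,W_N$ are independent 1-d Brownian motions; filtration generated by them and an independent $\mathcal F_0$. Data (independent of $N$): $T>0$, real constants $A,B,Q,R,G,\sigma,\sigma_0$, $a,b,q,r,g:\mathbb R\to\mathbb R$; primes denote derivatives. (A1) $Q,R,G,\sigma\ge0$, $\sigma_0>0$, $R>0$; $a,b,q,r,g$ bounded $C^2$ with bounded first and second derivatives. (A2) $\xi_1,\dots,\xi_N$ i.i.d., $\mathcal F_0$-measurable, fixed common law with finite second moment. (A3) $\exists\varepsilon_0>0$: $|R+\tfrac12r''(v)+yb''(v)|\ge\varepsilon_0$ for all $v,y$. $\rho$: the $C^1$ function with bounded derivative with $R\rho(y)+\tfrac12r'(\rho(y))+(B+b'(\rho(y)))y=0$. $P\ge0$ solves $\dot P+2AP+Q-R^{-1}B^2P^2=0$, $P(T)=G$. (A4) $a'(v)P(t)\ge R^{-1}Bb'(v)P(t)^2$, $B^2+Bb'(v)\ge0$ for all $t,v$. $k(t,x,y):=\rho(P(t)x+y)$, $\tilde b(t,x,y):=b(k(t,x,y))$. For $\theta\ge0$, PDE $\mathcal L_\theta$: $\partial_tF+\partial_xF[Ax+a(x)+Bk(t,x,F)+\tilde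 b(t,x,F)]+P(t)[a(x)+R^{-1}B^2P(t)x+Bk(t,x,F)+\tilde b(t,x,F)+a'(x)x]+\tfrac12(\theta+\sigma_0^2)\partial_{xx}F+\tfrac12q'(x)+(A+a'(x))F=0$, $F(T,x)=\tfrac12g'(x)$. $\Phi$, resp. $\Psi_N$, is its unique $C^{1,2}$ solution with bounded first and second $x$-derivatives for $\theta=0$, resp. $\theta=\sigma^2/N$. Feedback maps: $\beta^*(t,x,y):=-R^{-1}BP(t)(x-y)+k(t,y,\Phi(t,y))$ and $\bar\beta_N(t,x,y):=-R^{-1}BP(t)(x-y)+k(t,y,\Psi_N(t,y))$. Optimal states of Problem (LP): $\bar x_i$ solve $d\bar x_i=\{A\bar x_i+a(\bar x^{(N)})+B\bar\beta_N(t,\bar x_i,\bar x^{(N)})+b(k(t,\bar x^{(N)},\Psi_N(t,\bar x^{(N)})))\}dt+\sigma dW_i+\sigma_0dW^0$, $\bar x_i(0)=\xi_i$, with $\bar x^{(N)}=\frac1N\sum_i\bar x_i$ (the optimal controls are $\bar u_i=\bar\beta_N(t,\bar x_i,\bar x^{(N)})$). *)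

theory Defs
  imports "HOL-Probability.Probability"
begin

definition C2_bounded :: "(real \<Rightarrow> real) \<Rightarrow> bool" where
  "C2_bounded f \<longleftrightarrow>
     (\<forall>x. (f has_real_derivative deriv f x) (at x)) \<and>
     (\<forall>x. (deriv f has_real_derivative deriv (deriv f) x) (at x)) \<and>
     continuous_on UNIV (deriv (deriv f)) \<and>
     bounded (range f) \<and> bounded (range (deriv f)) \<and> bounded (range (deriv (deriv f)))"

definition kfun :: "(real \<Rightarrow> real) \<Rightarrow> (real \<Rightarrow> real) \<Rightarrow> real \<Rightarrow> real \<Rightarrow> real \<Rightarrow> real" where
  "kfun \<rho> P t x y = \<rho> (P t * x + y)"

definition is_pde_solution ::
  "real \<Rightarrow> real \<Rightarrow> real \<Rightarrow> real \<Rightarrow> real \<Rightarrow> (real \<Rightarrow> real) \<Rightarrow> (real \<Rightarrow> real) \<Rightarrow>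
   (real \<Rightarrow> real) \<Rightarrow> (real \<Rightarrow> real) \<Rightarrow> (real \<Rightarrow> real) \<Rightarrow> (real \<Rightarrow> real) \<Rightarrow> real \<Rightarrow>
   (real \<Rightarrow> real \<Rightarrow> real) \<Rightarrow> bool" where
  "is_pde_solution T A B R \<sigma>0 a b q g \<rho> P \<theta> F \<longleftrightarrow>
    (\<exists>Ft Fx Fxx.
      (\<forall>t\<in>{0..T}. \<forall>x. ((\<lambda>s. F s x) has_real_derivative Ft t x) (at t within {0..T})) \<and>
      (\<forall>t\<in>{0..T}. \<forall>x. (F t has_real_derivative Fx t x) (at x)) \<and>
      (\<forall>t\<in>{0..T}. \<forall>x. (Fx t has_real_derivative Fxx t x) (at x)) \<and>
      continuous_on ({0..T} \<times> UNIV) (\<lambda>(t,x). F t x) \<and>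
      continuous_on ({0..T} \<times> UNIV) (\<lambda>(t,x). Ft t x) \<and>
      continuous_on ({0..T} \<times> UNIV) (\<lambda>(t,x). Fx t x) \<and>
      continuous_on ({0..T} \<times> UNIV) (\<lambda>(t,x). Fxx t x) \<and>
      bounded ((\<lambda>(t,x). Fx t x) ` ({0..T} \<times> UNIV)) \<and>
      bounded ((\<lambda>(t,x). Fxx t x) ` ({0..T} \<times> UNIV)) \<and>
      (\<forall>t\<in>{0..T}. \<forall>x.
         Ft t x
         + Fx t x * (A * x + a x + B * kfun \<rho> P t x (F t x) + b (kfun \<rho> P t x (F t x)))
         + P t * (a x + B\<^sup>2 / R * P t * x + B * kfun \<rho> P t x (F t x)
                  + b (kfun \<rho> P t x (F t x)) + deriv a x * x)
         + (\<theta> + \<sigma>0\<^sup>2) / 2 * Fxx t x + deriv q x / 2 + (A + deriv a x) * F t x = 0) \<and>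
      (\<forall>x. F T x = deriv g x / 2))"

definition brownian_motion :: "'a measure \<Rightarrow> real \<Rightarrow> ('a \<Rightarrow> real \<Rightarrow> real) \<Rightarrow> bool" where
  "brownian_motion M T W \<longleftrightarrow>
    (\<forall>t\<in>{0..T}. (\<lambda>\<omega>. W \<omega> t) \<in> borel_measurable M) \<and>
    (AE \<omega> in M. W \<omega> 0 = 0 \<and> continuous_on {0..T} (W \<omega>)) \<and>
    (\<forall>(n::nat) (s::nat \<Rightarrow> real). 0 \<le> s 0 \<and> s n \<le> T \<and> (\<forall>k<n. s k < s (Suc k)) \<longrightarrow>
       prob_space.indep_vars M (\<lambda>_. borel) (\<lambda>k \<omega>. W \<omega> (s (Suc k)) - W \<omega> (s k)) {..<n} \<and>
       (\<forall>k<n. distributed M lborel (\<lambda>\<omega>. W \<omega> (s (Suc k)) - W \<omega> (s k))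
                 (\<lambda>x. ennreal (normal_density 0 (sqrt (s (Suc k) - s k)) x))))"

definition rv_events :: "'a measure \<Rightarrow> ('a \<Rightarrow> real) \<Rightarrow> 'a set set" where
  "rv_events M X = {X -` A \<inter> space M | A. A \<in> sets borel}"

definition process_events :: "'a measure \<Rightarrow> real \<Rightarrow> ('a \<Rightarrow> real \<Rightarrow> real) \<Rightarrow> 'a set set" where
  "process_events M T W =
     sigma_sets (space M) {(\<lambda>\<omega>. W \<omega> t) -` A \<inter> space M | t A. t \<in> {0..T} \<and> A \<in> sets borel}"

text \<open>Feedback map: -R^{-1} B P(t) (x - y) + k(t, y, F(t,y)); with F = Phi this is beta*,
 with F = Psi_N it is beta-bar_N.\<close>
definition feedback :: "real \<Rightarrow> real \<Rightarrow> (real \<Rightarrow> real) \<Rightarrow> (real \<Rightarrow> real) \<Rightarrow>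
    (real \<Rightarrow> real \<Rightarrow> real) \<Rightarrow> real \<Rightarrow> real \<Rightarrow> real \<Rightarrow> real" where
  "feedback B R \<rho> P F t x y = - (B / R) * P t * (x - y) + kfun \<rho> P t y (F t y)"

definition emp_mean :: "nat \<Rightarrow> (nat \<Rightarrow> 'a \<Rightarrow> real \<Rightarrow> real) \<Rightarrow> 'a \<Rightarrow> real \<Rightarrow> real" where
  "emp_mean N x \<omega> t = (\<Sum>j=1..N. x j \<omega> t) / real N"

text \<open>The N-player setup for Problem (LP): probability space M, initial states xi_1..xi_N,
 common noise W 0 (= W^0), idiosyncratic noises W 1..W N, Psi = Psi_N and optimal states xbar.\<close>
definition LP_setup ::
  "real \<Rightarrow> real \<Rightarrow> real \<Rightarrow> real \<Rightarrow> real \<Rightarrow> real \<Rightarrow>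
   (real \<Rightarrow> real) \<Rightarrow> (real \<Rightarrow> real) \<Rightarrow> (real \<Rightarrow> real) \<Rightarrow> (real \<Rightarrow> real) \<Rightarrow>
   (real \<Rightarrow> real) \<Rightarrow> (real \<Rightarrow> real) \<Rightarrow> real measure \<Rightarrow> nat \<Rightarrow>
   'a measure \<Rightarrow> (nat \<Rightarrow> 'a \<Rightarrow> real) \<Rightarrow> (nat \<Rightarrow> 'a \<Rightarrow> real \<Rightarrow> real) \<Rightarrow>
   (real \<Rightarrow> real \<Rightarrow> real) \<Rightarrow> (nat \<Rightarrow> 'a \<Rightarrow> real \<Rightarrow> real) \<Rightarrow> bool" where
  "LP_setup T A B R \<sigma> \<sigma>0 a b q g \<rho> P \<mu> N M \<xi> W \<Psi> xbar \<longleftrightarrow>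
    prob_space M \<and>
    (\<forall>i\<in>{1..N}. \<xi> i \<in> borel_measurable M \<and> distr M borel (\<xi> i) = \<mu>) \<and>
    (\<forall>j\<in>{0..N}. brownian_motion M T (W j)) \<and>
    prob_space.indep_sets M
      (\<lambda>k. case k of Inl i \<Rightarrow> rv_events M (\<xi> i) | Inr j \<Rightarrow> process_events M T (W j))
      (Inl ` {1..N} \<union> Inr ` {0..N}) \<and>
    is_pde_solution T A B R \<sigma>0 a b q g \<rho> P (\<sigma>\<^sup>2 / real N) \<Psi> \<and>
    (\<forall>i\<in>{1..N}. \<forall>t\<in>{0..T}. (\<lambda>\<omega>. xbar i \<omega> t) \<in> borel_measurable M) \<and>
    (AE \<omega> in M. \<forall>i\<in>{1..N}. continuous_on {0..T} (xbar i \<omega>) \<and>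
       (\<forall>t\<in>{0..T}. xbar i \<omega> t = \<xi> i \<omega>
          + integral {0..t} (\<lambda>s. A * xbar i \<omega> s + a (emp_mean N xbar \<omega> s)
              + B * feedback B R \<rho> P \<Psi> s (xbar i \<omega> s) (emp_mean N xbar \<omega> s)
              + b (kfun \<rho> P s (emp_mean N xbar \<omega> s) (\<Psi> s (emp_mean N xbar \<omega> s))))
          + \<sigma> * W i \<omega> t + \<sigma>0 * W 0 \<omega> t))"

end

theory Submission
  imports Defs
begin


lemma time_min_deriv:
  fixes g :: "real \<Rightarrow> real"
  assumes der: "(g has_real_derivative d) (at t within {0..T})"
    and t: "0 \<le> t" "t < T" and mn: "\<forall>s\<in>{t..T}. g s \<ge> g t"
  shows "d \<ge> 0"
proof (rule ccontr)
  assume "\<not> d \<ge> 0" hence dn: "d < 0" by simp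
  have "(g has_real_derivative d) (at t within {t..T})"
    using der by (rule has_field_derivative_subset) (use t in auto)
  hence "((\<lambda>y. (g y - g t) / (y - t)) \<longlongrightarrow> d) (at_right t)"
    using t by (simp add: has_field_derivative_iff at_within_Icc_at_right)
  hence "eventually (\<lambda>y. (g y - g t) / (y - t) < 0) (at_right t)"
    using dn by (rule order_tendstoD)
  then obtain b where b: "b > t" "\<And>y. y > t \<Longrightarrow> y < b \<Longrightarrow> (g y - g t) / (y - t) < 0"
    by (auto simp: eventually_at_right_field)
  define y where "y = (t + min b T) / 2"
  have y: "y > t" "y < b" "y \<le> T" using b t by (auto simp: y_def)
  have "(g y - g t) / (y - t) < 0" using b y by auto
  moreover have "g y - g t \<ge> 0" using mn y by auto
  ultimately show False using y by (simp add: divide_less_0_iff)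
qed

lemma space_min_deriv2:
  fixes f f' :: "real \<Rightarrow> real"
  assumes d1: "\<And>y. (f has_real_derivative f' y) (at y)"
    and d2: "(f' has_real_derivative d) (at x)"
    and mn: "\<forall>y. f y \<ge> f x"
  shows "f' x = 0 \<and> d \<ge> 0"
proof -
  have z: "f' x = 0"
    by (rule DERIV_local_min[OF d1, of 1]) (use mn in auto)
  moreover have "d \<ge> 0"
  proof (rule ccontr)
    assume "\<not> d \<ge> 0"
    then obtain e where e: "e > 0" "\<And>h. h > 0 \<Longrightarrow> h < e \<Longrightarrow> f' x > f' (x + h)"
      using DERIV_neg_dec_right[OF d2] by force
    obtain z where z2: "x < z" "z < x + e/2" "f (x + e/2) - f x = (x + e/2 - x) * f' z"
      using MVT2[of x "x + e/2" f f'] e d1 by auto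
    have "f' z < 0" using e(2)[of "z - x"] z2 z by auto
    hence "f (x + e/2) - f x < 0" using z2(3) e(1) by (metis half_gt_zero add_diff_cancel_left' mult_pos_neg)
    thus False using mn by (metis diff_ge_0_iff_ge not_le)
  qed
  ultimately show ?thesis by simp
qed

lemma max_principle0:
  fixes u ut ux uxx \<alpha> c :: "real \<Rightarrow> real \<Rightarrow> real" and \<kappa> T C cA :: real
  assumes kap: "\<kappa> \<ge> 0"
    and dt: "\<forall>t\<in>{0..T}. \<forall>x. ((\<lambda>s. u s x) has_real_derivative ut t x) (at t within {0..T})"
    and dx: "\<forall>t\<in>{0..T}. \<forall>x. (u t has_real_derivative ux t x) (at x)"
    and dxx: "\<forall>t\<in>{0..T}. \<forall>x. (ux t has_real_derivative uxx t x) (at x)"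
    and cont: "continuous_on ({0..T} \<times> UNIV) (\<lambda>(t,x). u t x)"
    and termc: "\<forall>x. u T x \<ge> 0"
    and grow: "\<forall>t\<in>{0..T}. \<forall>x. u t x \<ge> - C * (1 + \<bar>x\<bar>)"
    and alph: "\<forall>t\<in>{0..T}. \<forall>x. \<bar>\<alpha> t x\<bar> \<le> cA * (1 + \<bar>x\<bar>)"
    and cneg: "\<forall>t\<in>{0..T}. \<forall>x. c t x \<le> 0"
    and eq: "\<forall>t\<in>{0..T}. \<forall>x. ut t x + \<alpha> t x * ux t x + \<kappa> * uxx t x + c t x * u t x \<le> 0"
  shows "\<forall>t\<in>{0..T}. \<forall>x. u t x \<ge> 0"
proof (intro ballI allI, rule ccontr)
  fix t0 x0 assume t0: "t0 \<in> {0..T}" and neg: "\<not> 0 \<le> u t0 x0"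
  define C0 where "C0 = max C 0"
  define cA0 where "cA0 = max cA 0"
  have C0: "C0 \<ge> 0" "\<forall>t\<in>{0..T}. \<forall>x. u t x \<ge> - C0 * (1 + \<bar>x\<bar>)"
  proof -
    show "C0 \<ge> 0" by (simp add: C0_def)
    show "\<forall>t\<in>{0..T}. \<forall>x. u t x \<ge> - C0 * (1 + \<bar>x\<bar>)"
    proof (intro ballI allI)
      fix t x assume "t \<in> {0..T}"
      hence "u t x \<ge> - C * (1 + \<bar>x\<bar>)" using grow by auto
      moreover have "C * (1 + \<bar>x\<bar>) \<le> C0 * (1 + \<bar>x\<bar>)"
        by (rule mult_right_mono) (auto simp: C0_def)
      ultimately show "u t x \<ge> - C0 * (1 + \<bar>x\<bar>)" by linarith
    qed
  qed
  have cA0: "cA0 \<ge> 0" "\<forall>t\<in>{0..T}. \<forall>x. \<bar>\<alpha> t x\<bar> \<le> cA0 * (1 + \<bar>x\<bar>)"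
  proof -
    show "cA0 \<ge> 0" by (simp add: cA0_def)
    show "\<forall>t\<in>{0..T}. \<forall>x. \<bar>\<alpha> t x\<bar> \<le> cA0 * (1 + \<bar>x\<bar>)"
    proof (intro ballI allI)
      fix t x assume "t \<in> {0..T}"
      hence "\<bar>\<alpha> t x\<bar> \<le> cA * (1 + \<bar>x\<bar>)" using alph by auto
      moreover have "cA * (1 + \<bar>x\<bar>) \<le> cA0 * (1 + \<bar>x\<bar>)"
        by (rule mult_right_mono) (auto simp: cA0_def)
      ultimately show "\<bar>\<alpha> t x\<bar> \<le> cA0 * (1 + \<bar>x\<bar>)" by linarith
    qed
  qed
  define K where "K = 3 * cA0 + 2 * \<kappa> + 1"
  have K: "K \<ge> 1" using cA0 kap by (simp add: K_def)
  define pen where "pen t x = exp (-K * t) * (1 + x\<^sup>2)" for t x :: real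
  have pen_pos: "pen t x > 0" for t x by (simp add: pen_def add_pos_nonneg)
  define \<epsilon> where "\<epsilon> = - u t0 x0 / (2 * pen t0 x0)"
  have eps: "\<epsilon> > 0" using neg pen_pos[of t0 x0] by (simp add: \<epsilon>_def divide_neg_pos)
  define v where "v t x = u t x + \<epsilon> * pen t x" for t x
  have v0: "v t0 x0 < 0"
    using neg pen_pos[of t0 x0] by (simp add: v_def \<epsilon>_def field_simps)
  define \<eta> where "\<eta> = \<epsilon> * exp (- K * T)"
  have eta: "\<eta> > 0" using eps by (simp add: \<eta>_def)
  have pen_lb: "pen t x \<ge> exp (- K * T) * (1 + x\<^sup>2)" if "t \<in> {0..T}" for t x
    using that K unfolding pen_def by (intro mult_right_mono) (auto simp: add_nonneg_nonneg)
  define Rr where "Rr = max 1 (2 * C0 / \<eta>)"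
  have far: "v t x \<ge> 0" if "t \<in> {0..T}" "\<bar>x\<bar> \<ge> Rr" for t x
  proof -
    have x1: "\<bar>x\<bar> \<ge> 1" and x2: "\<bar>x\<bar> \<ge> 2 * C0 / \<eta>" using that by (auto simp: Rr_def)
    have "\<eta> * \<bar>x\<bar> \<ge> 2 * C0" using x2 eta by (simp add: field_simps)
    hence "\<eta> * \<bar>x\<bar> * \<bar>x\<bar> \<ge> 2 * C0 * \<bar>x\<bar>" by (rule mult_right_mono) simp
    hence a: "\<eta> * x\<^sup>2 \<ge> 2 * C0 * \<bar>x\<bar>" by (simp add: power2_eq_square abs_mult_self_eq mult.assoc)
    have b: "2 * C0 * \<bar>x\<bar> \<ge> C0 * (1 + \<bar>x\<bar>)" using x1 C0(1) mult_left_mono[OF x1 C0(1)] by (simp add: algebra_simps)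
    have c: "\<epsilon> * pen t x \<ge> \<eta> * (1 + x\<^sup>2)"
      using mult_left_mono[OF pen_lb[OF that(1), of x], of \<epsilon>] eps by (simp add: \<eta>_def mult.assoc)
    have "u t x \<ge> - C0 * (1 + \<bar>x\<bar>)" using C0(2) that(1) by auto
    thus ?thesis using a b c eta unfolding v_def by (simp add: algebra_simps)
  qed
  define S where "S = {0..T} \<times> {-Rr..Rr}"
  have pc: "continuous_on ({0..T} \<times> UNIV) (\<lambda>p::real\<times>real. \<epsilon> * (exp (- K * fst p) * (1 + (snd p)\<^sup>2)))"
    by (intro continuous_intros)
  have vcont: "continuous_on ({0..T} \<times> UNIV) (\<lambda>(t,x). v t x)"
    using continuous_on_add[OF cont pc] unfolding v_def pen_def by (simp add: case_prod_unfold)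
  have "continuous_on S (\<lambda>p. v (fst p) (snd p))"
    using continuous_on_subset[OF vcont, of S] unfolding S_def by (force simp: case_prod_unfold)
  moreover have "compact S" unfolding S_def by (intro compact_Times compact_Icc)
  moreover have "S \<noteq> {}" using t0 by (auto simp: S_def Rr_def)
  ultimately obtain p where p: "p \<in> S" "\<forall>q\<in>S. v (fst p) (snd p) \<le> v (fst q) (snd q)"
    using continuous_attains_inf by blast
  define t1 x1 where "t1 = fst p" and "x1 = snd p"
  have t1: "t1 \<in> {0..T}" and x1: "\<bar>x1\<bar> \<le> Rr" using p(1) by (auto simp: S_def t1_def x1_def)
  have x0: "\<bar>x0\<bar> \<le> Rr" using far[OF t0, of x0] v0 by force
  have glob: "v t1 x1 \<le> v t x" if "t \<in> {0..T}" for t x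
  proof (cases "\<bar>x\<bar> \<le> Rr")
    case True thus ?thesis using p(2)[rule_format, of "(t,x)"] that by (auto simp: S_def t1_def x1_def abs_le_iff)
  next
    case False
    have "v t1 x1 \<le> v t0 x0" using p(2)[rule_format, of "(t0,x0)"] t0 x0 by (auto simp: S_def t1_def x1_def abs_le_iff)
    thus ?thesis using far[OF that, of x] False v0 by linarith
  qed
  have vneg: "v t1 x1 < 0" using glob[OF t0, of x0] v0 by linarith
  have "t1 \<noteq> T"
  proof
    assume "t1 = T"
    hence "v t1 x1 \<ge> 0" using termc pen_pos[of T x1] eps unfolding v_def by (simp add: add_nonneg_pos order.strict_implies_order)
    thus False using vneg by simp
  qed
  hence t1T: "t1 < T" and t10: "0 \<le> t1" using t1 by auto
  define e where "e = exp (- K * t1)"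
  have e: "e > 0" by (simp add: e_def)
  have Dt: "((\<lambda>s. v s x1) has_real_derivative ut t1 x1 + \<epsilon> * ((-K * e) * (1 + x1\<^sup>2))) (at t1 within {0..T})"
    unfolding v_def pen_def e_def
    using dt t1 by (auto intro!: derivative_eq_intros)
  have Dx: "(v t1 has_real_derivative ux t1 y + \<epsilon> * (e * (2 * y))) (at y)" for y
    unfolding v_def pen_def e_def
    using dx t1 by (auto intro!: derivative_eq_intros)
  have Dxx: "((\<lambda>y. ux t1 y + \<epsilon> * (e * (2 * y))) has_real_derivative uxx t1 x1 + \<epsilon> * (e * 2)) (at x1)"
    using dxx t1 by (auto intro!: derivative_eq_intros)
  have vt: "ut t1 x1 + \<epsilon> * ((-K * e) * (1 + x1\<^sup>2)) \<ge> 0"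
    by (rule time_min_deriv[OF Dt t10 t1T]) (use glob t1 in auto)
  have sp: "ux t1 x1 + \<epsilon> * (e * (2 * x1)) = 0 \<and> uxx t1 x1 + \<epsilon> * (e * 2) \<ge> 0"
    by (rule space_min_deriv2[OF Dx Dxx]) (use glob t1 in auto)
  have cv: "c t1 x1 * v t1 x1 \<ge> 0" using cneg t1 vneg by (simp add: mult_nonpos_nonpos)
  have kv: "\<kappa> * (uxx t1 x1 + \<epsilon> * (e * 2)) \<ge> 0" using sp kap by simp
  have L: "0 \<le> (ut t1 x1 + \<epsilon> * ((-K * e) * (1 + x1\<^sup>2)))
       + \<alpha> t1 x1 * (ux t1 x1 + \<epsilon> * (e * (2 * x1))) + \<kappa> * (uxx t1 x1 + \<epsilon> * (e * 2)) + c t1 x1 * v t1 x1"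
    using vt sp cv kv by simp
  have E: "ut t1 x1 + \<alpha> t1 x1 * ux t1 x1 + \<kappa> * uxx t1 x1 + c t1 x1 * u t1 x1 \<le> 0" using eq t1 by auto
  define X where "X = 1 + x1\<^sup>2"
  have X: "X \<ge> 1" by (simp add: X_def)
  have a1: "\<alpha> t1 x1 * (2 * x1) \<le> 3 * cA0 * X"
  proof -
    have "\<alpha> t1 x1 * (2 * x1) \<le> \<bar>\<alpha> t1 x1\<bar> * (2 * \<bar>x1\<bar>)" by (simp add: abs_mult[symmetric])
    also have "\<dots> \<le> cA0 * (1 + \<bar>x1\<bar>) * (2 * \<bar>x1\<bar>)" using cA0(2) t1 by (intro mult_right_mono) auto
    also have "\<dots> \<le> cA0 * (3 * X)"
    proof -
      have "(1 + \<bar>x1\<bar>) * (2 * \<bar>x1\<bar>) \<le> 3 * X"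
      proof -
        have "0 \<le> (\<bar>x1\<bar> - 1)\<^sup>2" by simp
        hence "2 * \<bar>x1\<bar> \<le> 1 + \<bar>x1\<bar>\<^sup>2" by (simp add: power2_eq_square algebra_simps)
        thus ?thesis unfolding X_def by (simp add: power2_eq_square algebra_simps)
      qed
      thus ?thesis using cA0(1) by (simp add: mult.assoc mult_left_mono)
    qed
    finally show ?thesis by simp
  qed
  have a2: "c t1 x1 * X \<le> 0" using cneg t1 X by (simp add: mult_nonpos_nonneg)
  have br: "-K * X + \<alpha> t1 x1 * (2 * x1) + 2 * \<kappa> + c t1 x1 * X \<le> - X"
  proof -
    have "2 * \<kappa> \<le> 2 * \<kappa> * X" using kap X by (simp add: mult_le_cancel_left1)
    thus ?thesis using a1 a2 unfolding K_def by (simp add: algebra_simps)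
  qed
  have "(ut t1 x1 + \<epsilon> * ((-K * e) * (1 + x1\<^sup>2)))
       + \<alpha> t1 x1 * (ux t1 x1 + \<epsilon> * (e * (2 * x1))) + \<kappa> * (uxx t1 x1 + \<epsilon> * (e * 2)) + c t1 x1 * v t1 x1
     = (ut t1 x1 + \<alpha> t1 x1 * ux t1 x1 + \<kappa> * uxx t1 x1 + c t1 x1 * u t1 x1)
       + \<epsilon> * e * (-K * X + \<alpha> t1 x1 * (2 * x1) + 2 * \<kappa> + c t1 x1 * X)"
    unfolding v_def pen_def e_def X_def by (simp add: algebra_simps)
  also have "\<dots> \<le> 0 + \<epsilon> * e * (- X)"
    using E br eps e by (intro add_mono mult_left_mono) auto
  also have "\<dots> < 0" using eps e X by (simp add: mult_pos_pos)
  finally show False using L by simp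
qed

lemma max_principle1:
  fixes u ut ux uxx \<alpha> c :: "real \<Rightarrow> real \<Rightarrow> real" and \<kappa> T C cA \<Gamma> :: real
  assumes kap: "\<kappa> \<ge> 0"
    and dt: "\<forall>t\<in>{0..T}. \<forall>x. ((\<lambda>s. u s x) has_real_derivative ut t x) (at t within {0..T})"
    and dx: "\<forall>t\<in>{0..T}. \<forall>x. (u t has_real_derivative ux t x) (at x)"
    and dxx: "\<forall>t\<in>{0..T}. \<forall>x. (ux t has_real_derivative uxx t x) (at x)"
    and cont: "continuous_on ({0..T} \<times> UNIV) (\<lambda>(t,x). u t x)"
    and termc: "\<forall>x. u T x \<ge> 0"
    and grow: "\<forall>t\<in>{0..T}. \<forall>x. u t x \<ge> - C * (1 + \<bar>x\<bar>)"
    and alph: "\<forall>t\<in>{0..T}. \<forall>x. \<bar>\<alpha> t x\<bar> \<le> cA * (1 + \<bar>x\<bar>)"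
    and cb: "\<forall>t\<in>{0..T}. \<forall>x. c t x \<le> \<Gamma>"
    and eq: "\<forall>t\<in>{0..T}. \<forall>x. ut t x + \<alpha> t x * ux t x + \<kappa> * uxx t x + c t x * u t x \<le> 0"
  shows "\<forall>t\<in>{0..T}. \<forall>x. u t x \<ge> 0"
proof -
  define w where "w t x = exp (\<Gamma> * t) * u t x" for t x
  define C0 where "C0 = max C 0 * exp (\<bar>\<Gamma>\<bar> * \<bar>T\<bar>)"
  have "\<forall>t\<in>{0..T}. \<forall>x. w t x \<ge> 0"
  proof (rule max_principle0[where ut = "\<lambda>t x. exp (\<Gamma> * t) * (ut t x + \<Gamma> * u t x)"
        and ux = "\<lambda>t x. exp (\<Gamma> * t) * ux t x" and uxx = "\<lambda>t x. exp (\<Gamma> * t) * uxx t x"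
        and \<alpha> = \<alpha> and c = "\<lambda>t x. c t x - \<Gamma>" and \<kappa> = \<kappa> and C = C0 and cA = cA], goal_cases)
    case 1 show ?case by fact
  next
    case 2 show ?case
    proof (intro ballI allI)
      fix t x assume t: "t \<in> {0..T}"
      show "((\<lambda>s. w s x) has_real_derivative exp (\<Gamma> * t) * (ut t x + \<Gamma> * u t x)) (at t within {0..T})"
        unfolding w_def using dt t by (auto intro!: derivative_eq_intros simp: algebra_simps)
    qed
  next
    case 3 show ?case unfolding w_def using dx by (auto intro!: derivative_eq_intros)
  next
    case 4 show ?case using dxx by (auto intro!: derivative_eq_intros)
  next
    case 5
    have "continuous_on ({0..T} \<times> UNIV) (\<lambda>p::real\<times>real. exp (\<Gamma> * fst p))"
      by (intro continuous_intros)
    from continuous_on_mult[OF this cont] show ?case unfolding w_def by (simp add: case_prod_unfold)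
  next
    case 6 show ?case using termc by (simp add: w_def)
  next
    case 7 show ?case
    proof (intro ballI allI)
      fix t x assume t: "t \<in> {0..T}"
      have e1: "exp (\<Gamma> * t) \<le> exp (\<bar>\<Gamma>\<bar> * \<bar>T\<bar>)"
      proof -
        have "\<Gamma> * t \<le> \<bar>\<Gamma> * t\<bar>" by simp
        also have "\<dots> = \<bar>\<Gamma>\<bar> * \<bar>t\<bar>" by (simp add: abs_mult)
        also have "\<dots> \<le> \<bar>\<Gamma>\<bar> * \<bar>T\<bar>" using t by (intro mult_left_mono) auto
        finally show ?thesis by simp
      qed
      have u: "u t x \<ge> - max C 0 * (1 + \<bar>x\<bar>)"
      proof -
        have "u t x \<ge> - C * (1 + \<bar>x\<bar>)" using grow t by auto
        moreover have "C * (1 + \<bar>x\<bar>) \<le> max C 0 * (1 + \<bar>x\<bar>)" by (intro mult_right_mono) auto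
        ultimately show ?thesis by linarith
      qed
      show "w t x \<ge> - C0 * (1 + \<bar>x\<bar>)"
      proof (cases "u t x \<ge> 0")
        case True
        have "0 \<le> w t x" unfolding w_def using True by simp
        moreover have "0 \<le> C0 * (1 + \<bar>x\<bar>)" by (simp add: C0_def)
        ultimately show ?thesis by linarith
      next
        case False
        have "exp (\<Gamma> * t) * (- u t x) \<le> exp (\<bar>\<Gamma>\<bar> * \<bar>T\<bar>) * (max C 0 * (1 + \<bar>x\<bar>))"
          using False u e1 by (intro mult_mono) auto
        thus ?thesis unfolding w_def C0_def by (simp add: algebra_simps)
      qed
    qed
  next
    case 8 show ?case by fact
  next
    case 9 show ?case using cb by auto
  next
    case 10 show ?case
    proof (intro ballI allI)
      fix t x assume t: "t \<in> {0..T}"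
      have "exp (\<Gamma> * t) * (ut t x + \<Gamma> * u t x) + \<alpha> t x * (exp (\<Gamma> * t) * ux t x)
            + \<kappa> * (exp (\<Gamma> * t) * uxx t x) + (c t x - \<Gamma>) * w t x
          = exp (\<Gamma> * t) * (ut t x + \<alpha> t x * ux t x + \<kappa> * uxx t x + c t x * u t x)"
        unfolding w_def by (simp add: algebra_simps)
      also have "\<dots> \<le> 0" using eq t by (simp add: mult_nonneg_nonpos)
      finally show "exp (\<Gamma> * t) * (ut t x + \<Gamma> * u t x) + \<alpha> t x * (exp (\<Gamma> * t) * ux t x)
            + \<kappa> * (exp (\<Gamma> * t) * uxx t x) + (c t x - \<Gamma>) * w t x \<le> 0" .
    qed
  qed
  thus ?thesis unfolding w_def by (simp add: zero_le_mult_iff)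
qed

lemma upper_bound:
  fixes D Dt Dx Dxx \<alpha> \<gamma> f :: "real \<Rightarrow> real \<Rightarrow> real" and \<kappa> T C cA \<Gamma> F0 :: real
  assumes kap: "\<kappa> \<ge> 0" and G: "\<Gamma> \<ge> 0" and F0: "F0 \<ge> 0"
    and dt: "\<forall>t\<in>{0..T}. \<forall>x. ((\<lambda>s. D s x) has_real_derivative Dt t x) (at t within {0..T})"
    and dx: "\<forall>t\<in>{0..T}. \<forall>x. (D t has_real_derivative Dx t x) (at x)"
    and dxx: "\<forall>t\<in>{0..T}. \<forall>x. (Dx t has_real_derivative Dxx t x) (at x)"
    and cont: "continuous_on ({0..T} \<times> UNIV) (\<lambda>(t,x). D t x)"
    and termc: "\<forall>x. D T x = 0"
    and grow: "\<forall>t\<in>{0..T}. \<forall>x. D t x \<le> C * (1 + \<bar>x\<bar>)"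
    and alph: "\<forall>t\<in>{0..T}. \<forall>x. \<bar>\<alpha> t x\<bar> \<le> cA * (1 + \<bar>x\<bar>)"
    and gb: "\<forall>t\<in>{0..T}. \<forall>x. \<bar>\<gamma> t x\<bar> \<le> \<Gamma>"
    and fb: "\<forall>t\<in>{0..T}. \<forall>x. \<bar>f t x\<bar> \<le> F0"
    and eq: "\<forall>t\<in>{0..T}. \<forall>x. Dt t x + \<alpha> t x * Dx t x + \<kappa> * Dxx t x + \<gamma> t x * D t x = f t x"
  shows "\<forall>t\<in>{0..T}. \<forall>x. D t x \<le> F0 * exp ((\<Gamma> + 1) * T)"
proof -
  define c where "c = \<Gamma> + 1"
  have c: "c \<ge> 1" using G by (simp add: c_def)
  define \<phi> where "\<phi> t = F0 * (exp (c * (T - t)) - 1) / c" for t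
  have phi_nn: "\<phi> t \<ge> 0" if "t \<le> T" for t
    using that c F0 by (auto simp: \<phi>_def intro!: divide_nonneg_pos mult_nonneg_nonneg)
  have main: "\<forall>t\<in>{0..T}. \<forall>x. \<phi> t - D t x \<ge> 0"
  proof (rule max_principle1[where ut = "\<lambda>t x. - F0 * exp (c * (T - t)) - Dt t x"
        and ux = "\<lambda>t x. - Dx t x" and uxx = "\<lambda>t x. - Dxx t x"
        and \<alpha> = \<alpha> and c = \<gamma> and \<kappa> = \<kappa> and C = C and cA = cA and \<Gamma> = \<Gamma>], goal_cases)
    case 1 show ?case by fact
  next
    case 2 show ?case
    proof (intro ballI allI)
      fix t x assume t: "t \<in> {0..T}"
      show "((\<lambda>s. \<phi> s - D s x) has_real_derivative - F0 * exp (c * (T - t)) - Dt t x) (at t within {0..T})"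
        unfolding \<phi>_def using dt t c by (auto intro!: derivative_eq_intros simp: field_simps)
    qed
  next
    case 3 show ?case using dx by (auto intro!: derivative_eq_intros)
  next
    case 4 show ?case using dxx by (auto intro!: derivative_eq_intros)
  next
    case 5
    have "continuous_on ({0..T} \<times> UNIV) (\<lambda>p::real\<times>real. \<phi> (fst p))"
      unfolding \<phi>_def by (intro continuous_intros) (use c in auto)
    from continuous_on_diff[OF this cont] show ?case by (simp add: case_prod_unfold)
  next
    case 6 show ?case using termc by (simp add: \<phi>_def)
  next
    case 7 show ?case
    proof (intro ballI allI)
      fix t x assume t: "t \<in> {0..T}"
      have "D t x \<le> C * (1 + \<bar>x\<bar>)" using grow t by auto
      moreover have "\<phi> t \<ge> 0" using phi_nn t by auto
      ultimately show "- C * (1 + \<bar>x\<bar>) \<le> \<phi> t - D t x" by linarith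
    qed
  next
    case 8 show ?case by fact
  next
    case 9 show ?case using gb by (auto simp: abs_le_iff)
  next
    case 10 show ?case
    proof (intro ballI allI)
      fix t x assume t: "t \<in> {0..T}"
      define E where "E = exp (c * (T - t))"
      have E: "E \<ge> 1" using t c by (simp add: E_def)
      have "\<gamma> t x * \<phi> t \<le> \<Gamma> * \<phi> t"
        using gb t phi_nn[of t] by (intro mult_right_mono) (auto simp: abs_le_iff)
      also have "\<Gamma> * \<phi> t = (\<Gamma> / c) * (F0 * (E - 1))" by (simp add: \<phi>_def E_def)
      also have "\<dots> \<le> 1 * (F0 * (E - 1))"
        using c G F0 E by (intro mult_right_mono) (auto simp: c_def)
      finally have g: "\<gamma> t x * \<phi> t \<le> F0 * (E - 1)" by simp
      have "- F0 * E - Dt t x + \<alpha> t x * - Dx t x + \<kappa> * - Dxx t x + \<gamma> t x * (\<phi> t - D t x)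
           = - F0 * E + \<gamma> t x * \<phi> t - (Dt t x + \<alpha> t x * Dx t x + \<kappa> * Dxx t x + \<gamma> t x * D t x)"
        by (simp add: algebra_simps)
      also have "\<dots> \<le> - F0 * E + F0 * (E - 1) + F0"
      proof -
        have e: "Dt t x + \<alpha> t x * Dx t x + \<kappa> * Dxx t x + \<gamma> t x * D t x = f t x" using eq t by auto
        have "\<bar>f t x\<bar> \<le> F0" using fb t by auto
        hence "- F0 \<le> f t x" by linarith
        thus ?thesis using g e by linarith
      qed
      also have "\<dots> = 0" by (simp add: algebra_simps)
      finally show "- F0 * exp (c * (T - t)) - Dt t x + \<alpha> t x * - Dx t x + \<kappa> * - Dxx t x
          + \<gamma> t x * (\<phi> t - D t x) \<le> 0" by (simp add: E_def)
    qed
  qed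
  show ?thesis
  proof (intro ballI allI)
    fix t x assume t: "t \<in> {0..T}"
    have "D t x \<le> \<phi> t" using main t by auto
    also have "\<phi> t \<le> F0 * exp (c * (T - t)) / c" using F0 c by (simp add: \<phi>_def divide_right_mono algebra_simps)
    also have "\<dots> \<le> F0 * exp (c * (T - t))"
    proof -
      have "0 \<le> F0 * exp (c * (T - t))" using F0 by simp
      thus ?thesis using c by (simp add: divide_le_eq mult_le_cancel_left1)
    qed
    also have "\<dots> \<le> F0 * exp (c * T)" using F0 c t by (intro mult_left_mono) auto
    finally show "D t x \<le> F0 * exp ((\<Gamma> + 1) * T)" by (simp add: c_def)
  qed
qed

lemma abs_bound:
  fixes D Dt Dx Dxx \<alpha> \<gamma> f :: "real \<Rightarrow> real \<Rightarrow> real" and \<kappa> T C cA \<Gamma> F0 :: real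
  assumes kap: "\<kappa> \<ge> 0" and G: "\<Gamma> \<ge> 0" and F0: "F0 \<ge> 0"
    and dt: "\<forall>t\<in>{0..T}. \<forall>x. ((\<lambda>s. D s x) has_real_derivative Dt t x) (at t within {0..T})"
    and dx: "\<forall>t\<in>{0..T}. \<forall>x. (D t has_real_derivative Dx t x) (at x)"
    and dxx: "\<forall>t\<in>{0..T}. \<forall>x. (Dx t has_real_derivative Dxx t x) (at x)"
    and cont: "continuous_on ({0..T} \<times> UNIV) (\<lambda>(t,x). D t x)"
    and termc: "\<forall>x. D T x = 0"
    and grow: "\<forall>t\<in>{0..T}. \<forall>x. \<bar>D t x\<bar> \<le> C * (1 + \<bar>x\<bar>)"
    and alph: "\<forall>t\<in>{0..T}. \<forall>x. \<bar>\<alpha> t x\<bar> \<le> cA * (1 + \<bar>x\<bar>)"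
    and gb: "\<forall>t\<in>{0..T}. \<forall>x. \<bar>\<gamma> t x\<bar> \<le> \<Gamma>"
    and fb: "\<forall>t\<in>{0..T}. \<forall>x. \<bar>f t x\<bar> \<le> F0"
    and eq: "\<forall>t\<in>{0..T}. \<forall>x. Dt t x + \<alpha> t x * Dx t x + \<kappa> * Dxx t x + \<gamma> t x * D t x = f t x"
  shows "\<forall>t\<in>{0..T}. \<forall>x. \<bar>D t x\<bar> \<le> F0 * exp ((\<Gamma> + 1) * T)"
proof -
  have up: "\<forall>t\<in>{0..T}. \<forall>x. D t x \<le> F0 * exp ((\<Gamma> + 1) * T)"
    by (rule upper_bound[OF kap G F0 dt dx dxx cont termc _ alph gb fb eq, of C])
       (use grow in \<open>auto simp: abs_le_iff\<close>)
  have "\<forall>t\<in>{0..T}. \<forall>x. (\<lambda>t x. - D t x) t x \<le> F0 * exp ((\<Gamma> + 1) * T)"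
  proof (rule upper_bound[where Dt = "\<lambda>t x. - Dt t x" and Dx = "\<lambda>t x. - Dx t x"
        and Dxx = "\<lambda>t x. - Dxx t x" and \<alpha> = \<alpha> and \<gamma> = \<gamma> and f = "\<lambda>t x. - f t x" and C = C and cA = cA,
        OF kap G F0], goal_cases)
    case 1 show ?case using dt by (auto intro!: derivative_eq_intros)
  next
    case 2 show ?case using dx by (auto intro!: derivative_eq_intros)
  next
    case 3 show ?case using dxx by (auto intro!: derivative_eq_intros)
  next
    case 4 show ?case using continuous_on_minus[OF cont] by (simp add: case_prod_unfold)
  next
    case 5 show ?case using termc by simp
  next
    case 6 show ?case using grow by (auto simp: abs_le_iff)
  next
    case 7 show ?case by fact
  next
    case 8 show ?case by fact
  next
    case 9 show ?case using fb by simp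
  next
    case 10 show ?case
    proof (intro ballI allI)
      fix t x assume "t \<in> {0..T}"
      hence "Dt t x + \<alpha> t x * Dx t x + \<kappa> * Dxx t x + \<gamma> t x * D t x = f t x" using eq by auto
      thus "- Dt t x + \<alpha> t x * - Dx t x + \<kappa> * - Dxx t x + \<gamma> t x * - D t x = - f t x"
        by (simp add: algebra_simps)
    qed
  qed
  thus ?thesis using up by (auto simp: abs_le_iff)
qed

lemma lip_from_deriv:
  fixes f f' :: "real \<Rightarrow> real"
  assumes d: "\<And>y. (f has_real_derivative f' y) (at y)" and b: "\<And>y. \<bar>f' y\<bar> \<le> L"
  shows "\<bar>f x - f z\<bar> \<le> L * \<bar>x - z\<bar>"
proof -
  have key: "\<bar>f q - f p\<bar> \<le> L * \<bar>q - p\<bar>" if pq: "p < q" for p q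
  proof -
    obtain w where "p < w" "w < q" "f q - f p = (q - p) * f' w" using MVT2[OF pq, of f f'] d by blast
    hence "\<bar>f q - f p\<bar> = \<bar>q - p\<bar> * \<bar>f' w\<bar>" by (simp add: abs_mult)
    also have "\<dots> \<le> \<bar>q - p\<bar> * L" using b by (intro mult_left_mono) auto
    finally show ?thesis by (simp add: mult.commute)
  qed
  consider "z < x" | "x < z" | "x = z" by linarith
  thus ?thesis
  proof cases
    case 1 thus ?thesis using key by blast
  next
    case 2 thus ?thesis using key[OF 2] by (simp add: abs_minus_commute)
  qed simp
qed

lemma lin_growth:
  fixes F Fx :: "real \<Rightarrow> real \<Rightarrow> real"
  assumes dx: "\<forall>t\<in>{0..T}. \<forall>x. (F t has_real_derivative Fx t x) (at x)"
    and bnd: "\<forall>t\<in>{0..T}. \<forall>x. \<bar>Fx t x\<bar> \<le> S"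
    and cont: "continuous_on ({0..T} \<times> UNIV) (\<lambda>(t,x). F t x)"
  shows "\<exists>C. \<forall>t\<in>{0..T}. \<forall>x. \<bar>F t x\<bar> \<le> C * (1 + \<bar>x\<bar>)"
proof -
  have "continuous_on {0..T} (\<lambda>t. (\<lambda>(t,x). F t x) (t, 0::real))"
    by (rule continuous_on_compose2[OF cont]) (auto intro!: continuous_intros)
  hence "compact ((\<lambda>t. F t 0) ` {0..T})" by (intro compact_continuous_image) auto
  then obtain M0 where M0: "\<forall>y\<in>(\<lambda>t. F t 0) ` {0..T}. norm y \<le> M0"
    using compact_imp_bounded bounded_iff by metis
  show ?thesis
  proof (intro exI ballI allI)
    fix t x assume t: "t \<in> {0..T}"
    have l: "\<bar>F t x - F t 0\<bar> \<le> S * \<bar>x - 0\<bar>"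
      by (rule lip_from_deriv[of "F t" "Fx t"]) (use dx bnd t in auto)
    have m: "\<bar>F t 0\<bar> \<le> M0" using M0 t by auto
    have "\<bar>F t x\<bar> \<le> M0 + S * \<bar>x\<bar>" using l m by simp
    also have "\<dots> \<le> (\<bar>M0\<bar> + \<bar>S\<bar>) + (\<bar>M0\<bar> + \<bar>S\<bar>) * \<bar>x\<bar>"
      by (intro add_mono mult_right_mono) auto
    finally show "\<bar>F t x\<bar> \<le> (\<bar>M0\<bar> + \<bar>S\<bar>) * (1 + \<bar>x\<bar>)" by (simp add: algebra_simps)
  qed
qed

lemma bnd_img:
  fixes F :: "real \<Rightarrow> real \<Rightarrow> real"
  assumes "bounded ((\<lambda>(t,x). F t x) ` ({0..T} \<times> UNIV))"
  shows "\<exists>S. \<forall>t\<in>{0..T}. \<forall>x. \<bar>F t x\<bar> \<le> S"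
proof -
  obtain S where S: "\<forall>y\<in>(\<lambda>(t,x). F t x) ` ({0..T} \<times> UNIV). norm y \<le> S"
    using assms bounded_iff by metis
  show ?thesis
  proof (intro exI ballI allI)
    fix t x assume "t \<in> {0..T}"
    hence "F t x \<in> (\<lambda>(t,x). F t x) ` ({0..T} \<times> UNIV)" by (intro rev_image_eqI[of "(t,x)"]) auto
    thus "\<bar>F t x\<bar> \<le> S" using S by auto
  qed
qed

lemma bnd_range:
  fixes f :: "real \<Rightarrow> real"
  assumes "bounded (range f)"
  shows "\<exists>S. \<forall>x. \<bar>f x\<bar> \<le> S"
  using assms unfolding bounded_iff by auto

lemma alg_id:
  fixes ft1 fx1 fxx1 ft2 fx2 fxx2 Ax ax B k1 k2 bk1 bk2 p c d s0 q g F1 F2 th1 th2 :: real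
  assumes "ft1 + fx1 * (Ax + ax + B * k1 + bk1) + p * (ax + c + B * k1 + bk1 + d)
             + (th1 + s0) / 2 * fxx1 + q + g * F1 = 0"
    and "ft2 + fx2 * (Ax + ax + B * k2 + bk2) + p * (ax + c + B * k2 + bk2 + d)
             + (th2 + s0) / 2 * fxx2 + q + g * F2 = 0"
  shows "(ft1 - ft2) + (Ax + ax + B * k2 + bk2) * (fx1 - fx2) + (th2 + s0) / 2 * (fxx1 - fxx2)
          + g * (F1 - F2) + (fx1 + p) * (B * (k1 - k2) + (bk1 - bk2)) = (th2 - th1) / 2 * fxx1"
proof -
  have "(ft1 - ft2) + (Ax + ax + B * k2 + bk2) * (fx1 - fx2) + (th2 + s0) / 2 * (fxx1 - fxx2)
          + g * (F1 - F2) + (fx1 + p) * (B * (k1 - k2) + (bk1 - bk2)) - (th2 - th1) / 2 * fxx1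
        = (ft1 + fx1 * (Ax + ax + B * k1 + bk1) + p * (ax + c + B * k1 + bk1 + d)
             + (th1 + s0) / 2 * fxx1 + q + g * F1)
          - (ft2 + fx2 * (Ax + ax + B * k2 + bk2) + p * (ax + c + B * k2 + bk2 + d)
             + (th2 + s0) / 2 * fxx2 + q + g * F2)"
    by (simp add: algebra_simps add_divide_distrib diff_divide_distrib)
  thus ?thesis using assms by simp
qed


theorem mainTheorem15:
  fixes T A B Q R G \<sigma> \<sigma>0 :: real
    and a b q r g \<rho> P :: "real \<Rightarrow> real"
    and \<mu> :: "real measure"
    and \<Phi> :: "real \<Rightarrow> real \<Rightarrow> real"
  assumes T_pos: "T > 0"
    and A1_const: "Q \<ge> 0" "R > 0" "G \<ge> 0" "\<sigma> \<ge> 0" "\<sigma>0 > 0"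
    and A1_fun: "C2_bounded a" "C2_bounded b" "C2_bounded q" "C2_bounded r" "C2_bounded g"
    and A2: "prob_space \<mu>" "sets \<mu> = sets borel" "integrable \<mu> (\<lambda>x. x\<^sup>2)"
    and A3: "\<exists>\<epsilon>0>0. \<forall>v y. \<bar>R + deriv (deriv r) v / 2 + y * deriv (deriv b) v\<bar> \<ge> \<epsilon>0"
    and rho_eq: "\<forall>y. R * \<rho> y + deriv r (\<rho> y) / 2 + (B + deriv b (\<rho> y)) * y = 0"
    and rho_C1: "\<forall>y. (\<rho> has_real_derivative deriv \<rho> y) (at y)"
      "continuous_on UNIV (deriv \<rho>)" "bounded (range (deriv \<rho>))"
    and P_ode: "\<forall>t\<in>{0..T}. (P has_real_derivative
                   (- (2 * A * P t + Q - B\<^sup>2 / R * (P t)\<^sup>2))) (at t within {0..T})"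
    and P_end: "P T = G"
    and P_nonneg: "\<forall>t\<in>{0..T}. P t \<ge> 0"
    and A4: "\<forall>t\<in>{0..T}. \<forall>v. deriv a v * P t \<ge> B / R * deriv b v * (P t)\<^sup>2"
      "\<forall>v. B\<^sup>2 + B * deriv b v \<ge> 0"
    and Phi_sol: "is_pde_solution T A B R \<sigma>0 a b q g \<rho> P 0 \<Phi>"
  shows "\<exists>K::real. \<forall>(N::nat) (M::'a measure) \<xi> W \<Psi> xbar.
           N \<ge> 1 \<and> LP_setup T A B R \<sigma> \<sigma>0 a b q g \<rho> P \<mu> N M \<xi> W \<Psi> xbar \<longrightarrow>
           (\<forall>i\<in>{1..N}.
              (\<integral>\<^sup>+ \<omega>. (\<Squnion>t\<in>{0..T}. ennreal
                  ((feedback B R \<rho> P \<Phi> t (xbar i \<omega> t) (emp_mean N xbar \<omega> t)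
                    - feedback B R \<rho> P \<Psi> t (xbar i \<omega> t) (emp_mean N xbar \<omega> t))\<^sup>2)) \<partial>M)
              \<le> ennreal (K / (real N)\<^sup>2))"
  proof -
  from Phi_sol[unfolded is_pde_solution_def] obtain Ft1 Fx1 Fxx1 where
    dt1: "\<forall>t\<in>{0..T}. \<forall>x. ((\<lambda>s. \<Phi> s x) has_real_derivative Ft1 t x) (at t within {0..T})" and
    dx1: "\<forall>t\<in>{0..T}. \<forall>x. (\<Phi> t has_real_derivative Fx1 t x) (at x)" and
    dxx1: "\<forall>t\<in>{0..T}. \<forall>x. (Fx1 t has_real_derivative Fxx1 t x) (at x)" and
    c1: "continuous_on ({0..T} \<times> UNIV) (\<lambda>(t,x). \<Phi> t x)" and
    bx1: "bounded ((\<lambda>(t,x). Fx1 t x) ` ({0..T} \<times> UNIV))" and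
    bxx1: "bounded ((\<lambda>(t,x). Fxx1 t x) ` ({0..T} \<times> UNIV))" and
    eq1: "\<forall>t\<in>{0..T}. \<forall>x.
         Ft1 t x
         + Fx1 t x * (A * x + a x + B * kfun \<rho> P t x (\<Phi> t x) + b (kfun \<rho> P t x (\<Phi> t x)))
         + P t * (a x + B\<^sup>2 / R * P t * x + B * kfun \<rho> P t x (\<Phi> t x)
                  + b (kfun \<rho> P t x (\<Phi> t x)) + deriv a x * x)
         + (0 + \<sigma>0\<^sup>2) / 2 * Fxx1 t x + deriv q x / 2 + (A + deriv a x) * \<Phi> t x = 0" and
    T1: "\<forall>x. \<Phi> T x = deriv g x / 2"
    by blast
  obtain S1 where S1: "\<forall>t\<in>{0..T}. \<forall>x. \<bar>Fx1 t x\<bar> \<le> S1" using bnd_img[OF bx1] by blast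
  obtain S2 where S2: "\<forall>t\<in>{0..T}. \<forall>x. \<bar>Fxx1 t x\<bar> \<le> S2" using bnd_img[OF bxx1] by blast
  have S1p: "S1 \<ge> 0"
  proof -
    have "\<bar>Fx1 0 0\<bar> \<le> S1" using S1 T_pos by auto
    thus ?thesis by linarith
  qed
  have S2p: "S2 \<ge> 0"
  proof -
    have "\<bar>Fxx1 0 0\<bar> \<le> S2" using S2 T_pos by auto
    thus ?thesis by linarith
  qed
  have da: "\<And>x. (a has_real_derivative deriv a x) (at x)" and ba: "bounded (range a)"
    and bda: "bounded (range (deriv a))"
    using A1_fun(1) unfolding C2_bounded_def by auto
  have db: "\<And>x. (b has_real_derivative deriv b x) (at x)" and bb: "bounded (range b)"
    and bdb: "bounded (range (deriv b))"
    using A1_fun(2) unfolding C2_bounded_def by auto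
  obtain Sa where Sa: "\<And>x. \<bar>deriv a x\<bar> \<le> Sa" using bnd_range[OF bda] by blast
  obtain Sa0 where Sa0: "\<And>x. \<bar>a x\<bar> \<le> Sa0" using bnd_range[OF ba] by blast
  obtain Lb where Lb: "\<And>x. \<bar>deriv b x\<bar> \<le> Lb" using bnd_range[OF bdb] by blast
  obtain Sb0 where Sb0: "\<And>x. \<bar>b x\<bar> \<le> Sb0" using bnd_range[OF bb] by blast
  obtain L\<rho> where Lr: "\<And>x. \<bar>deriv \<rho> x\<bar> \<le> L\<rho>" using bnd_range[OF rho_C1(3)] by blast
  have Sap: "Sa \<ge> 0" using Sa[of 0] by linarith
  have Lbp: "Lb \<ge> 0" using Lb[of 0] by linarith
  have Lrp: "L\<rho> \<ge> 0" using Lr[of 0] by linarith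
  have lipr: "\<bar>\<rho> y - \<rho> z\<bar> \<le> L\<rho> * \<bar>y - z\<bar>" for y z
    by (rule lip_from_deriv) (use rho_C1(1) Lr in auto)
  have lipb: "\<bar>b y - b z\<bar> \<le> Lb * \<bar>y - z\<bar>" for y z
    by (rule lip_from_deriv[OF db Lb])
  have Pcont: "continuous_on {0..T} P"
    by (rule DERIV_continuous_on) (use P_ode in auto)
  hence "compact (P ` {0..T})" by (intro compact_continuous_image) auto
  then obtain SP where SP0: "\<forall>y\<in>P ` {0..T}. norm y \<le> SP"
    using compact_imp_bounded bounded_iff by metis
  have SP: "\<bar>P t\<bar> \<le> SP" if "t \<in> {0..T}" for t using SP0 that by auto
  have SPp: "SP \<ge> 0" using SP[of 0] T_pos by force
  define \<Lambda> where "\<Lambda> = (\<bar>B\<bar> + Lb) * L\<rho>"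
  define \<Gamma> where "\<Gamma> = \<bar>A\<bar> + Sa + (S1 + SP) * \<Lambda>"
  define E where "E = exp ((\<Gamma> + 1) * T)"
  define X0 where "X0 = L\<rho> * (\<sigma>\<^sup>2 / 2 * S2) * E"
  have Lap: "\<Lambda> \<ge> 0" using Lbp Lrp by (simp add: \<Lambda>_def)
  have Gp: "\<Gamma> \<ge> 0" using Sap S1p SPp Lap by (simp add: \<Gamma>_def)
  have X0p: "X0 \<ge> 0" using Lrp S2p by (simp add: X0_def E_def)
  show ?thesis
  proof (rule exI[of _ "X0\<^sup>2"], intro allI impI ballI)
    fix N :: nat and M :: "'a measure" and \<xi> W \<Psi> xbar i
    assume H: "N \<ge> 1 \<and> LP_setup T A B R \<sigma> \<sigma>0 a b q g \<rho> P \<mu> N M \<xi> W \<Psi> xbar"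
    have N: "real N \<ge> 1" using H by simp
    have PS: "prob_space M" and Psi_sol: "is_pde_solution T A B R \<sigma>0 a b q g \<rho> P (\<sigma>\<^sup>2 / real N) \<Psi>"
      using H unfolding LP_setup_def by auto
    define \<theta> where "\<theta> = \<sigma>\<^sup>2 / real N"
    have thp: "\<theta> \<ge> 0" by (simp add: \<theta>_def)
    from Psi_sol[unfolded is_pde_solution_def, folded \<theta>_def] obtain Ft2 Fx2 Fxx2 where
      dt2: "\<forall>t\<in>{0..T}. \<forall>x. ((\<lambda>s. \<Psi> s x) has_real_derivative Ft2 t x) (at t within {0..T})" and
      dx2: "\<forall>t\<in>{0..T}. \<forall>x. (\<Psi> t has_real_derivative Fx2 t x) (at x)" and
      dxx2: "\<forall>t\<in>{0..T}. \<forall>x. (Fx2 t has_real_derivative Fxx2 t x) (at x)" and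
      c2: "continuous_on ({0..T} \<times> UNIV) (\<lambda>(t,x). \<Psi> t x)" and
      bx2: "bounded ((\<lambda>(t,x). Fx2 t x) ` ({0..T} \<times> UNIV))" and
      eq2: "\<forall>t\<in>{0..T}. \<forall>x.
         Ft2 t x
         + Fx2 t x * (A * x + a x + B * kfun \<rho> P t x (\<Psi> t x) + b (kfun \<rho> P t x (\<Psi> t x)))
         + P t * (a x + B\<^sup>2 / R * P t * x + B * kfun \<rho> P t x (\<Psi> t x)
                  + b (kfun \<rho> P t x (\<Psi> t x)) + deriv a x * x)
         + (\<theta> + \<sigma>0\<^sup>2) / 2 * Fxx2 t x + deriv q x / 2 + (A + deriv a x) * \<Psi> t x = 0" and
      T2: "\<forall>x. \<Psi> T x = deriv g x / 2"
      by blast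
    obtain S1' where S1': "\<forall>t\<in>{0..T}. \<forall>x. \<bar>Fx2 t x\<bar> \<le> S1'" using bnd_img[OF bx2] by blast
    obtain C1 where C1: "\<forall>t\<in>{0..T}. \<forall>x. \<bar>\<Phi> t x\<bar> \<le> C1 * (1 + \<bar>x\<bar>)"
      using lin_growth[OF dx1 S1 c1] by blast
    obtain C2 where C2: "\<forall>t\<in>{0..T}. \<forall>x. \<bar>\<Psi> t x\<bar> \<le> C2 * (1 + \<bar>x\<bar>)"
      using lin_growth[OF dx2 S1' c2] by blast
    have C2p: "C2 \<ge> 0"
    proof -
      have "(0::real) \<in> {0..T}" using T_pos by simp
      hence "\<bar>\<Psi> 0 0\<bar> \<le> C2 * (1 + \<bar>0\<bar>)" using C2 by blast
      thus ?thesis by simp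
    qed
    define D where "D t x = \<Phi> t x - \<Psi> t x" for t x
    define k1 where "k1 t x = kfun \<rho> P t x (\<Phi> t x)" for t x
    define k2 where "k2 t x = kfun \<rho> P t x (\<Psi> t x)" for t x
    define HH where "HH t x = B * (k1 t x - k2 t x) + (b (k1 t x) - b (k2 t x))" for t x
    define \<alpha> where "\<alpha> t x = A * x + a x + B * k2 t x + b (k2 t x)" for t x
    define \<gamma> where "\<gamma> t x = A + deriv a x + (if D t x = 0 then 0 else (Fx1 t x + P t) * HH t x / D t x)" for t x
    define \<kappa> where "\<kappa> = (\<theta> + \<sigma>0\<^sup>2) / 2"
    define f where "f t x = \<theta> / 2 * Fxx1 t x" for t x
    have kdiff: "\<bar>k1 t x - k2 t x\<bar> \<le> L\<rho> * \<bar>D t x\<bar>" for t x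
      using lipr[of "P t * x + \<Phi> t x" "P t * x + \<Psi> t x"] by (simp add: k1_def k2_def kfun_def D_def)
    have HHb: "\<bar>HH t x\<bar> \<le> \<Lambda> * \<bar>D t x\<bar>" for t x
    proof -
      have "\<bar>HH t x\<bar> \<le> \<bar>B\<bar> * \<bar>k1 t x - k2 t x\<bar> + Lb * \<bar>k1 t x - k2 t x\<bar>"
        unfolding HH_def using lipb[of "k1 t x" "k2 t x"]
          abs_triangle_ineq[of "B * (k1 t x - k2 t x)" "b (k1 t x) - b (k2 t x)"]
        unfolding abs_mult by linarith
      also have "\<dots> = (\<bar>B\<bar> + Lb) * \<bar>k1 t x - k2 t x\<bar>" by (simp add: algebra_simps)
      also have "\<dots> \<le> (\<bar>B\<bar> + Lb) * (L\<rho> * \<bar>D t x\<bar>)" using kdiff Lbp by (intro mult_left_mono) auto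
      finally show ?thesis by (simp add: \<Lambda>_def mult.assoc)
    qed
    have gD: "\<gamma> t x * D t x = (A + deriv a x) * D t x + (Fx1 t x + P t) * HH t x" for t x
    proof (cases "D t x = 0")
      case True
      hence "k1 t x = k2 t x" by (simp add: D_def k1_def k2_def)
      thus ?thesis using True by (simp add: \<gamma>_def HH_def)
    next
      case False thus ?thesis by (simp add: \<gamma>_def field_simps)
    qed
    have Deq: "\<forall>t\<in>{0..T}. \<forall>x. (\<lambda>t x. Ft1 t x - Ft2 t x) t x + \<alpha> t x * (\<lambda>t x. Fx1 t x - Fx2 t x) t x
        + \<kappa> * (\<lambda>t x. Fxx1 t x - Fxx2 t x) t x + \<gamma> t x * D t x = f t x"
    proof (intro ballI allI)
      fix t x assume t: "t \<in> {0..T}"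
      have e1: "Ft1 t x + Fx1 t x * (A * x + a x + B * k1 t x + b (k1 t x))
         + P t * (a x + B\<^sup>2 / R * P t * x + B * k1 t x + b (k1 t x) + deriv a x * x)
         + (0 + \<sigma>0\<^sup>2) / 2 * Fxx1 t x + deriv q x / 2 + (A + deriv a x) * \<Phi> t x = 0"
        using eq1 t unfolding k1_def by blast
      have e2: "Ft2 t x + Fx2 t x * (A * x + a x + B * k2 t x + b (k2 t x))
         + P t * (a x + B\<^sup>2 / R * P t * x + B * k2 t x + b (k2 t x) + deriv a x * x)
         + (\<theta> + \<sigma>0\<^sup>2) / 2 * Fxx2 t x + deriv q x / 2 + (A + deriv a x) * \<Psi> t x = 0"
        using eq2 t unfolding k2_def by blast
      have "(Ft1 t x - Ft2 t x) + (A * x + a x + B * k2 t x + b (k2 t x)) * (Fx1 t x - Fx2 t x)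
          + (\<theta> + \<sigma>0\<^sup>2) / 2 * (Fxx1 t x - Fxx2 t x) + (A + deriv a x) * (\<Phi> t x - \<Psi> t x)
          + (Fx1 t x + P t) * (B * (k1 t x - k2 t x) + (b (k1 t x) - b (k2 t x))) = (\<theta> - 0) / 2 * Fxx1 t x"
        by (rule alg_id[OF e1 e2])
      hence "(Ft1 t x - Ft2 t x) + (A * x + a x + B * k2 t x + b (k2 t x)) * (Fx1 t x - Fx2 t x)
          + (\<theta> + \<sigma>0\<^sup>2) / 2 * (Fxx1 t x - Fxx2 t x) + (A + deriv a x) * (\<Phi> t x - \<Psi> t x)
          + (Fx1 t x + P t) * (B * (k1 t x - k2 t x) + (b (k1 t x) - b (k2 t x))) = \<theta> / 2 * Fxx1 t x"
        by (simp only: diff_zero)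
      thus "(\<lambda>t x. Ft1 t x - Ft2 t x) t x + \<alpha> t x * (\<lambda>t x. Fx1 t x - Fx2 t x) t x
        + \<kappa> * (\<lambda>t x. Fxx1 t x - Fxx2 t x) t x + \<gamma> t x * D t x = f t x"
        using gD[of t x] unfolding \<alpha>_def \<kappa>_def f_def HH_def D_def by linarith
    qed
    define cA where "cA = \<bar>A\<bar> + \<bar>Sa0\<bar> + \<bar>Sb0\<bar> + \<bar>B\<bar> * (\<bar>\<rho> 0\<bar> + L\<rho> * (SP + C2))"
    have k2b: "\<bar>k2 t x\<bar> \<le> (\<bar>\<rho> 0\<bar> + L\<rho> * (SP + C2)) * (1 + \<bar>x\<bar>)" if t: "t \<in> {0..T}" for t x
    proof -
      have "\<bar>k2 t x\<bar> \<le> \<bar>\<rho> 0\<bar> + L\<rho> * \<bar>P t * x + \<Psi> t x\<bar>"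
        using lipr[of "P t * x + \<Psi> t x" 0] abs_triangle_ineq2[of "\<rho> (P t * x + \<Psi> t x)" "\<rho> 0"]
        unfolding k2_def kfun_def diff_zero by linarith
      also have "\<bar>P t * x + \<Psi> t x\<bar> \<le> SP * \<bar>x\<bar> + C2 * (1 + \<bar>x\<bar>)"
      proof -
        have "\<bar>\<Psi> t x\<bar> \<le> C2 * (1 + \<bar>x\<bar>)" using C2 t by auto
        moreover have "\<bar>P t\<bar> * \<bar>x\<bar> \<le> SP * \<bar>x\<bar>" using SP[OF t] by (intro mult_right_mono) auto
        ultimately show ?thesis using abs_triangle_ineq[of "P t * x" "\<Psi> t x"] unfolding abs_mult by linarith
      qed
      also have "SP * \<bar>x\<bar> + C2 * (1 + \<bar>x\<bar>) \<le> (SP + C2) * (1 + \<bar>x\<bar>)"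
        using SPp by (simp add: algebra_simps)
      finally have "\<bar>k2 t x\<bar> \<le> \<bar>\<rho> 0\<bar> + L\<rho> * ((SP + C2) * (1 + \<bar>x\<bar>))"
        using Lrp by (simp add: mult_left_mono)
      also have "\<dots> \<le> (\<bar>\<rho> 0\<bar> + L\<rho> * (SP + C2)) * (1 + \<bar>x\<bar>)"
        by (simp add: algebra_simps)
      finally show ?thesis .
    qed
    have alph: "\<forall>t\<in>{0..T}. \<forall>x. \<bar>\<alpha> t x\<bar> \<le> cA * (1 + \<bar>x\<bar>)"
    proof (intro ballI allI)
      fix t x assume t: "t \<in> {0..T}"
      have "\<bar>\<alpha> t x\<bar> \<le> \<bar>A\<bar> * \<bar>x\<bar> + \<bar>a x\<bar> + \<bar>B\<bar> * \<bar>k2 t x\<bar> + \<bar>b (k2 t x)\<bar>"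
        unfolding \<alpha>_def by (simp add: abs_mult[symmetric] abs_triangle_ineq4
            order_trans[OF abs_triangle_ineq] add_mono)
      also have "\<dots> \<le> \<bar>A\<bar> * (1 + \<bar>x\<bar>) + \<bar>Sa0\<bar> * (1 + \<bar>x\<bar>)
          + \<bar>B\<bar> * ((\<bar>\<rho> 0\<bar> + L\<rho> * (SP + C2)) * (1 + \<bar>x\<bar>)) + \<bar>Sb0\<bar> * (1 + \<bar>x\<bar>)"
      proof -
        have h1: "\<bar>A\<bar> * \<bar>x\<bar> \<le> \<bar>A\<bar> * (1 + \<bar>x\<bar>)" by (simp add: mult_left_mono)
        have h2: "\<bar>a x\<bar> \<le> \<bar>Sa0\<bar> * (1 + \<bar>x\<bar>)"
        proof -
          have "\<bar>Sa0\<bar> * 1 \<le> \<bar>Sa0\<bar> * (1 + \<bar>x\<bar>)" by (intro mult_left_mono) auto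
          thus ?thesis using Sa0[of x] abs_ge_self[of Sa0] by linarith
        qed
        have h3: "\<bar>B\<bar> * \<bar>k2 t x\<bar> \<le> \<bar>B\<bar> * ((\<bar>\<rho> 0\<bar> + L\<rho> * (SP + C2)) * (1 + \<bar>x\<bar>))"
          by (intro mult_left_mono k2b[OF t]) simp
        have h4: "\<bar>b (k2 t x)\<bar> \<le> \<bar>Sb0\<bar> * (1 + \<bar>x\<bar>)"
        proof -
          have "\<bar>Sb0\<bar> * 1 \<le> \<bar>Sb0\<bar> * (1 + \<bar>x\<bar>)" by (intro mult_left_mono) auto
          thus ?thesis using Sb0[of "k2 t x"] abs_ge_self[of Sb0] by linarith
        qed
        show ?thesis using h1 h2 h3 h4 by linarith
      qed
      also have "\<dots> = cA * (1 + \<bar>x\<bar>)" by (simp add: cA_def algebra_simps)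
      finally show "\<bar>\<alpha> t x\<bar> \<le> cA * (1 + \<bar>x\<bar>)" .
    qed
    have gb: "\<forall>t\<in>{0..T}. \<forall>x. \<bar>\<gamma> t x\<bar> \<le> \<Gamma>"
    proof (intro ballI allI)
      fix t x assume t: "t \<in> {0..T}"
      have Xb: "\<bar>(if D t x = 0 then 0 else (Fx1 t x + P t) * HH t x / D t x)\<bar> \<le> (S1 + SP) * \<Lambda>"
      proof (cases "D t x = 0")
        case True thus ?thesis using S1p SPp Lap by simp
      next
        case False
        have "\<bar>(Fx1 t x + P t) * HH t x / D t x\<bar> = \<bar>Fx1 t x + P t\<bar> * (\<bar>HH t x\<bar> / \<bar>D t x\<bar>)"
          by (simp add: abs_mult)
        also have "\<dots> \<le> (S1 + SP) * \<Lambda>"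
        proof (rule mult_mono)
          have "\<bar>Fx1 t x\<bar> \<le> S1" using S1 t by auto
          thus "\<bar>Fx1 t x + P t\<bar> \<le> S1 + SP" using SP[OF t] abs_triangle_ineq[of "Fx1 t x" "P t"] by linarith
          show "\<bar>HH t x\<bar> / \<bar>D t x\<bar> \<le> \<Lambda>" using HHb[of t x] False by (simp add: divide_le_eq)
        qed (use S1p SPp in auto)
        finally show ?thesis using False by simp
      qed
      have "\<bar>\<gamma> t x\<bar> \<le> \<bar>A\<bar> + \<bar>deriv a x\<bar> + \<bar>(if D t x = 0 then 0 else (Fx1 t x + P t) * HH t x / D t x)\<bar>"
        unfolding \<gamma>_def using abs_triangle_ineq[of "A + deriv a x"] abs_triangle_ineq[of A "deriv a x"] by linarith
      thus "\<bar>\<gamma> t x\<bar> \<le> \<Gamma>" using Xb Sa[of x] unfolding \<Gamma>_def by linarith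
    qed
    have fb: "\<forall>t\<in>{0..T}. \<forall>x. \<bar>f t x\<bar> \<le> \<theta> / 2 * S2"
    proof (intro ballI allI)
      fix t x assume "t \<in> {0..T}"
      hence "\<bar>Fxx1 t x\<bar> \<le> S2" using S2 by auto
      thus "\<bar>f t x\<bar> \<le> \<theta> / 2 * S2" using thp by (simp add: f_def abs_mult mult_left_mono)
    qed
    have Dgrow: "\<forall>t\<in>{0..T}. \<forall>x. \<bar>D t x\<bar> \<le> (C1 + C2) * (1 + \<bar>x\<bar>)"
    proof (intro ballI allI)
      fix t x assume t: "t \<in> {0..T}"
      have "\<bar>D t x\<bar> \<le> \<bar>\<Phi> t x\<bar> + \<bar>\<Psi> t x\<bar>" unfolding D_def by (rule abs_triangle_ineq4)
      also have "\<dots> \<le> C1 * (1 + \<bar>x\<bar>) + C2 * (1 + \<bar>x\<bar>)" using C1 C2 t by (intro add_mono) auto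
      finally show "\<bar>D t x\<bar> \<le> (C1 + C2) * (1 + \<bar>x\<bar>)" by (simp add: algebra_simps)
    qed
    have Dbound: "\<forall>t\<in>{0..T}. \<forall>x. \<bar>D t x\<bar> \<le> \<theta> / 2 * S2 * exp ((\<Gamma> + 1) * T)"
    proof (rule abs_bound[where Dt = "\<lambda>t x. Ft1 t x - Ft2 t x" and Dx = "\<lambda>t x. Fx1 t x - Fx2 t x"
          and Dxx = "\<lambda>t x. Fxx1 t x - Fxx2 t x" and \<alpha> = \<alpha> and \<gamma> = \<gamma> and f = f and \<kappa> = \<kappa>
          and C = "C1 + C2" and cA = cA], goal_cases)
      case 1 show ?case using thp by (simp add: \<kappa>_def)
    next
      case 2 show ?case by (rule Gp)
    next
      case 3 show ?case using thp S2p by simp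
    next
      case 4 show ?case unfolding D_def using dt1 dt2 by (auto intro!: derivative_eq_intros)
    next
      case 5 show ?case unfolding D_def using dx1 dx2 by (auto intro!: derivative_eq_intros)
    next
      case 6 show ?case using dxx1 dxx2 by (auto intro!: derivative_eq_intros)
    next
      case 7 show ?case using continuous_on_diff[OF c1 c2] unfolding D_def by (simp add: case_prod_unfold)
    next
      case 8 show ?case unfolding D_def using T1 T2 by (intro allI) (metis diff_self)
    next
      case 9 show ?case by (rule Dgrow)
    next
      case 10 show ?case by (rule alph)
    next
      case 11 show ?case by (rule gb)
    next
      case 12 show ?case by (rule fb)
    next
      case 13 show ?case by (rule Deq)
    qed
    have ptw: "(feedback B R \<rho> P \<Phi> t y z - feedback B R \<rho> P \<Psi> t y z)\<^sup>2 \<le> X0\<^sup>2 / (real N)\<^sup>2"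
      if t: "t \<in> {0..T}" for t y z
    proof -
      have "\<bar>feedback B R \<rho> P \<Phi> t y z - feedback B R \<rho> P \<Psi> t y z\<bar>
          = \<bar>\<rho> (P t * z + \<Phi> t z) - \<rho> (P t * z + \<Psi> t z)\<bar>"
        by (simp add: feedback_def kfun_def)
      also have "\<dots> \<le> L\<rho> * \<bar>D t z\<bar>" using lipr[of "P t * z + \<Phi> t z" "P t * z + \<Psi> t z"] by (simp add: D_def)
      also have "\<dots> \<le> L\<rho> * (\<theta> / 2 * S2 * exp ((\<Gamma> + 1) * T))"
        using Dbound t Lrp by (intro mult_left_mono) auto
      also have "\<dots> = X0 / real N" by (simp add: X0_def E_def \<theta>_def)
      finally have "\<bar>feedback B R \<rho> P \<Phi> t y z - feedback B R \<rho> P \<Psi> t y z\<bar> \<le> X0 / real N" .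
      hence "\<bar>feedback B R \<rho> P \<Phi> t y z - feedback B R \<rho> P \<Psi> t y z\<bar>\<^sup>2 \<le> (X0 / real N)\<^sup>2"
        by (intro power_mono) auto
      thus ?thesis by (simp add: power_divide)
    qed
    have "(\<integral>\<^sup>+ \<omega>. (\<Squnion>t\<in>{0..T}. ennreal
                  ((feedback B R \<rho> P \<Phi> t (xbar i \<omega> t) (emp_mean N xbar \<omega> t)
                    - feedback B R \<rho> P \<Psi> t (xbar i \<omega> t) (emp_mean N xbar \<omega> t))\<^sup>2)) \<partial>M)
          \<le> (\<integral>\<^sup>+ \<omega>. ennreal (X0\<^sup>2 / (real N)\<^sup>2) \<partial>M)"
      by (intro nn_integral_mono SUP_least ennreal_leI ptw) auto
    also have "\<dots> = ennreal (X0\<^sup>2 / (real N)\<^sup>2)"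
      using prob_space.emeasure_space_1[OF PS] by simp
    finally show "(\<integral>\<^sup>+ \<omega>. (\<Squnion>t\<in>{0..T}. ennreal
                  ((feedback B R \<rho> P \<Phi> t (xbar i \<omega> t) (emp_mean N xbar \<omega> t)
                    - feedback B R \<rho> P \<Psi> t (xbar i \<omega> t) (emp_mean N xbar \<omega> t))\<^sup>2)) \<partial>M)
          \<le> ennreal (X0\<^sup>2 / (real N)\<^sup>2)" .
  qed
qed

end
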